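(* Let $F_1=F_2=1$, $F_{k+1}=F_k+F_{k-1}$, and let $A=\{F_k : k\ge 1\}=\{1,2,3,5,8,\dots\}$. Then for every $n\ge 1$, $\mathrm{Total}(n,A)=F_{2n+1}-1$.
   Context: For an integer $n\ge 0$ and a set $A$ of positive integers with $1\in A$, the abstract generalized 2048 game $\mathrm{AGG}(n,A)$ is played on $n$ indistinguishable cells. A position assigns to each cell either nothing (empty) or a tile with a value in $A$; the initial position has all cells empty. A step, performable from any position with at least one empty cell, consists of: (i) placing a new tile of value $1$ into a chosen empty cell; then (ii) optionally choosing pairwise disjoint sets of nonempty cells, each with tile-value sum in $A$, and merging each set into a single tile of that sum placed in one of its cells, the other cells of the set becoming empty. The game ends when after a step all cells are nonempty. A position is reachable if obtainable from the initial position by finitely many steps; its total value is the sum of its tile values. $\mathrm{Total}(n,A)$ is the supremum of total values of reachable positions of $\mathrm{AGG}(n,A)$. *)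

theory Defs
  imports Main "HOL-Library.Multiset" "HOL-Library.Extended_Nat" "HOL-Number_Theory.Fib"
begin

text \<open>A position of AGG(n,A) is the multiset of tile values on the (indistinguishable)
  cells; empty cells are not recorded, so a position has size at most n.\<close>

text \<open>One step: place a tile of value 1 into an empty cell (requires size P < n), then
  optionally merge pairwise disjoint groups of tiles (each group a nonempty sub-multiset
  with sum in A) into single tiles of their sums.\<close>
definition agg_step :: "nat \<Rightarrow> nat set \<Rightarrow> nat multiset \<Rightarrow> nat multiset \<Rightarrow> bool" where
  "agg_step n A P Q \<longleftrightarrow> size P < n \<and>
     (\<exists>R Gs. P + {#1#} = R + sum_list Gs \<and>
        (\<forall>G\<in>set Gs. G \<noteq> {#} \<and> sum_mset G \<in> A) \<and>
        Q = R + mset (map sum_mset Gs))"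

definition agg_reachable :: "nat \<Rightarrow> nat set \<Rightarrow> nat multiset \<Rightarrow> bool" where
  "agg_reachable n A P \<longleftrightarrow> (agg_step n A)\<^sup>*\<^sup>* {#} P"

definition agg_Total :: "nat \<Rightarrow> nat set \<Rightarrow> enat" where
  "agg_Total n A = (SUP P\<in>{P. agg_reachable n A P}. enat (sum_mset P))"

definition fib_set :: "nat set" where
  "fib_set = {fib k | k. k \<ge> 1}"

end

theory Submission
  imports Defs
begin

definition big :: "nat \<Rightarrow> nat multiset \<Rightarrow> nat" where
  "big j X = size (filter_mset (\<lambda>x. fib (2*j) < x) X)"
definition small :: "nat \<Rightarrow> nat multiset \<Rightarrow> nat" where
  "small j X = sum_mset (filter_mset (\<lambda>x. x \<le> fib (2*j)) X)"
definition Inv :: "nat \<Rightarrow> nat multiset \<Rightarrow> bool" where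
  "Inv n X \<longleftrightarrow> (\<forall>j\<le>n. big j X + j \<le> n)"

lemma big_plus[simp]: "big j (X + Y) = big j X + big j Y"
  by (simp add: big_def)
lemma small_plus[simp]: "small j (X + Y) = small j X + small j Y"
  by (simp add: small_def)

lemma sum_mset_bound: "(\<forall>x\<in>#M. x \<le> (c::nat)) \<Longrightarrow> sum_mset M \<le> size M * c"
  by (induction M) auto

lemma big_split: "big j X = big (Suc j) X
   + size (filter_mset (\<lambda>x. fib (2*j) < x \<and> x \<le> fib (2*Suc j)) X)"
proof -
  have m: "fib (2*j) \<le> fib (2*Suc j)" by (rule fib_mono) simp
  have "filter_mset (\<lambda>x. fib (2*j) < x) X = filter_mset (\<lambda>x. fib (2*Suc j) < x) X
     + filter_mset (\<lambda>x. fib (2*j) < x \<and> x \<le> fib (2*Suc j)) X"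
    by (rule multiset_eqI) (use m in auto)
  then show ?thesis unfolding big_def by (simp only: size_union)
qed

lemma small_split: "small (Suc j) X = small j X
   + sum_mset (filter_mset (\<lambda>x. fib (2*j) < x \<and> x \<le> fib (2*Suc j)) X)"
proof -
  have m: "fib (2*j) \<le> fib (2*Suc j)" by (rule fib_mono) simp
  have "filter_mset (\<lambda>x. x \<le> fib (2*Suc j)) X = filter_mset (\<lambda>x. x \<le> fib (2*j)) X
     + filter_mset (\<lambda>x. fib (2*j) < x \<and> x \<le> fib (2*Suc j)) X"
    by (rule multiset_eqI) (use m in auto)
  then show ?thesis unfolding small_def by (simp only: sum_mset.union)
qed

lemma small_bound:
  assumes "Inv n X" "j \<le> n"
  shows "small j X + 1 + (big j X + j) * fib (2*j) \<le> fib (2*j+1) + n * fib (2*j)"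
  using assms(2)
proof (induction j)
  case 0
  have "small 0 X \<le> size (filter_mset (\<lambda>x. x \<le> fib (2*0)) X) * 0"
    unfolding small_def by (rule sum_mset_bound) auto
  then show ?case by simp
next
  case (Suc j)
  define M where "M = filter_mset (\<lambda>x. fib (2*j) < x \<and> x \<le> fib (2*Suc j)) X"
  define a where "a = fib (2*j)"
  define F where "F = fib (2*j+1)"
  define c where "c = fib (2*Suc j)"
  have c: "c = a + F" unfolding a_def F_def c_def
    using fib_plus_2[of "2*j"] by simp
  have F3: "fib (2*Suc j + 1) = c + F" unfolding F_def c_def
    using fib_plus_2[of "2*j+1"] by simp
  have IH: "small j X + 1 + (big j X + j) * a \<le> F + n * a"
    using Suc by (simp add: a_def F_def)
  have bs: "big j X = big (Suc j) X + size M" unfolding M_def by (rule big_split)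
  have ss: "small (Suc j) X = small j X + sum_mset M" unfolding M_def by (rule small_split)
  have sM: "sum_mset M \<le> size M * c" unfolding M_def c_def by (rule sum_mset_bound) auto
  have inv: "big j X + j \<le> n" using assms(1) Suc.prems unfolding Inv_def by simp
  then obtain t where t: "n = big j X + j + t" using le_Suc_ex by blast
  have "small j X + 1 \<le> F + t * a" using IH t by (simp add: algebra_simps)
  moreover have "t * a \<le> t * c" using c by simp
  ultimately have h: "small j X + 1 \<le> F + t * c" by linarith
  have "small (Suc j) X + 1 + (big (Suc j) X + Suc j) * c
      \<le> small j X + 1 + size M * c + (big (Suc j) X + Suc j) * c" using ss sM by simp
  also have "\<dots> = small j X + 1 + (big j X + j) * c + c" using bs by (simp add: algebra_simps)
  also have "\<dots> \<le> F + t * c + (big j X + j) * c + c" using h by simp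
  also have "\<dots> = F + c + n * c" using t by (simp add: algebra_simps)
  finally show ?case using F3 c_def by simp
qed

lemma group_bound:
  assumes "sum_mset G \<in> fib_set"
  shows "fib (2*j+1) * big j {#sum_mset G#} \<le> fib (2*j+1) * big j G + small j G"
proof (cases "big j G = 0")
  case False
  have "big j {#sum_mset G#} \<le> 1" by (simp add: big_def)
  then have "big j {#sum_mset G#} \<le> big j G" using False by simp
  then have "fib (2*j+1) * big j {#sum_mset G#} \<le> fib (2*j+1) * big j G"
    by (rule mult_le_mono2)
  then show ?thesis by linarith
next
  case b0: True
  then have "filter_mset (\<lambda>x. fib (2*j) < x) G = {#}" unfolding big_def by simp
  then have all: "\<forall>x\<in>#G. x \<le> fib (2*j)"
    by (auto simp: not_less)
  then have "filter_mset (\<lambda>x. x \<le> fib (2*j)) G = G" by (simp add: filter_mset_eq_conv)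
  then have sG: "small j G = sum_mset G" unfolding small_def by simp
  obtain k where k: "sum_mset G = fib k" using assms unfolding fib_set_def by auto
  show ?thesis
  proof (cases "fib (2*j) < sum_mset G")
    case lt: True
    have b1: "big j {#sum_mset G#} = 1" using lt by (simp add: big_def)
    have "2*j < k"
    proof (rule ccontr)
      assume "\<not> 2*j < k"
      then have "fib k \<le> fib (2*j)" by (intro fib_mono) simp
      then show False using lt k by simp
    qed
    then have "fib (2*j+1) \<le> fib k" by (intro fib_mono) simp
    then show ?thesis using b1 sG k by simp
  next
    case ge: False
    have "big j {#sum_mset G#} = 0" using ge by (simp add: big_def)
    then show ?thesis by simp
  qed
qed

lemma list_bound:
  assumes "\<forall>G\<in>set Gs. sum_mset G \<in> fib_set"
  shows "fib (2*j+1) * big j (mset (map sum_mset Gs))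
     \<le> fib (2*j+1) * big j (sum_list Gs) + small j (sum_list Gs)"
  using assms
proof (induction Gs)
  case Nil
  then show ?case by (simp add: big_def)
next
  case (Cons G Gs)
  have e: "big j (mset (map sum_mset (G#Gs))) = big j {#sum_mset G#} + big j (mset (map sum_mset Gs))"
    by (simp add: big_def)
  have ih: "fib (2*j+1) * big j (mset (map sum_mset Gs))
     \<le> fib (2*j+1) * big j (sum_list Gs) + small j (sum_list Gs)" using Cons by simp
  have g: "fib (2*j+1) * big j {#sum_mset G#} \<le> fib (2*j+1) * big j G + small j G"
    using Cons.prems group_bound[of G j] by simp
  have s1: "big j (sum_list (G#Gs)) = big j G + big j (sum_list Gs)" by simp
  have s2: "small j (sum_list (G#Gs)) = small j G + small j (sum_list Gs)" by simp
  show ?case unfolding e s1 s2 distrib_left using ih g by linarith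
qed

lemma step_inv:
  assumes inv: "Inv n P" and st: "agg_step n fib_set P Q"
  shows "Inv n Q"
proof -
  from st obtain R Gs where sz: "size P < n" and X: "P + {#1#} = R + sum_list Gs"
    and G: "\<forall>G\<in>set Gs. G \<noteq> {#} \<and> sum_mset G \<in> fib_set"
    and Q: "Q = R + mset (map sum_mset Gs)"
    unfolding agg_step_def by blast
  define X where "X = P + {#1#}"
  have invX: "Inv n X" unfolding Inv_def
  proof (intro allI impI)
    fix j assume j: "j \<le> n"
    show "big j X + j \<le> n"
    proof (cases "j = 0")
      case True
      have "big 0 P \<le> size P" unfolding big_def by (rule size_filter_mset_lesseq)
      moreover have "big 0 X = big 0 P + 1" by (simp add: X_def big_def)
      moreover have "big j X + j = big 0 X" using True by simp
      ultimately show ?thesis using sz by linarith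
    next
      case False
      then have "fib (2*j) > 0" by (intro fib_neq_0_nat) simp
      then have "big j {#1#} = 0" by (simp add: big_def)
      moreover have "big j X = big j P + big j {#1#}" unfolding X_def by (rule big_plus)
      moreover have "big j P + j \<le> n" using inv j by (simp add: Inv_def)
      ultimately show ?thesis by linarith
    qed
  qed
  show ?thesis unfolding Inv_def
  proof (intro allI impI)
    fix j assume j: "j \<le> n"
    define F where "F = fib (2*j+1)"
    define a where "a = fib (2*j)"
    have Fa: "a \<le> F" unfolding a_def F_def by (rule fib_mono) simp
    have Fpos: "F > 0" unfolding F_def by (intro fib_neq_0_nat) simp
    have lb: "F * big j (mset (map sum_mset Gs)) \<le> F * big j (sum_list Gs) + small j (sum_list Gs)"
      unfolding F_def using list_bound G by blast
    have XR: "X = R + sum_list Gs" using X X_def by simp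
    have "F * big j Q = F * big j R + F * big j (mset (map sum_mset Gs))"
      using Q by (simp add: algebra_simps)
    also have "\<dots> \<le> F * big j X + small j X" using lb XR by (simp add: algebra_simps)
    finally have h1: "F * big j Q \<le> F * big j X + small j X" .
    have sb: "small j X + 1 + (big j X + j) * a \<le> F + n * a"
      using small_bound[OF invX j] unfolding F_def a_def .
    have "big j X + j \<le> n" using invX j unfolding Inv_def by blast
    then obtain t where t: "n = big j X + j + t" using le_Suc_ex by blast
    have "small j X + 1 \<le> F + t * a" using sb t by (simp add: algebra_simps)
    moreover have "t * a \<le> t * F" using Fa by simp
    ultimately have h2: "small j X + 1 \<le> F + t * F" by linarith
    show "big j Q + j \<le> n"
    proof (rule ccontr)
      assume "\<not> big j Q + j \<le> n"
      from \<open>\<not> big j Q + j \<le> n\<close> have "big j X + t + 1 \<le> big j Q" using t by simp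
      then have "F * (big j X + t + 1) \<le> F * big j Q" by (rule mult_le_mono2)
      then have "F * big j X + F * t + F \<le> F * big j Q" by (simp add: algebra_simps)
      then show False using h1 h2 by (simp add: algebra_simps)
    qed
  qed
qed

lemma reach_inv: "(agg_step n fib_set)\<^sup>*\<^sup>* P Q \<Longrightarrow> Inv n P \<Longrightarrow> Inv n Q"
  by (induction rule: rtranclp_induct) (auto intro: step_inv)

lemma upper: "agg_reachable n fib_set Q \<Longrightarrow> sum_mset Q \<le> fib (2*n+1) - 1"
proof -
  assume r: "agg_reachable n fib_set Q"
  have "Inv n {#}" by (simp add: Inv_def big_def)
  then have inv: "Inv n Q" using r reach_inv unfolding agg_reachable_def by blast
  then have "big n Q = 0" unfolding Inv_def by fastforce
  then have "filter_mset (\<lambda>x. fib (2*n) < x) Q = {#}" unfolding big_def by simp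
  then have "\<forall>x\<in>#Q. x \<le> fib (2*n)"
    by (auto simp: not_less)
  then have "filter_mset (\<lambda>x. x \<le> fib (2*n)) Q = Q" by (simp add: filter_mset_eq_conv)
  then have sQ: "small n Q = sum_mset Q" unfolding small_def by simp
  have "small n Q + 1 + (big n Q + n) * fib (2*n) \<le> fib (2*n+1) + n * fib (2*n)"
    using small_bound[OF inv] by simp
  then show ?thesis using sQ \<open>big n Q = 0\<close> by simp
qed

lemma lift_step: "agg_step m A P Q \<Longrightarrow> agg_step (m + size B) A (B + P) (B + Q)"
proof -
  assume "agg_step m A P Q"
  then obtain R Gs where "size P < m" "P + {#1#} = R + sum_list Gs"
    "\<forall>G\<in>set Gs. G \<noteq> {#} \<and> sum_mset G \<in> A" "Q = R + mset (map sum_mset Gs)"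
    unfolding agg_step_def by blast
  then show ?thesis unfolding agg_step_def
    by (intro conjI exI[of _ "B + R"] exI[of _ Gs]) (simp_all add: ac_simps)
qed

lemma lift_rt: "(agg_step m A)\<^sup>*\<^sup>* P Q \<Longrightarrow> (agg_step (m + size B) A)\<^sup>*\<^sup>* (B + P) (B + Q)"
  by (induction rule: rtranclp_induct) (auto intro: lift_step rtranclp.rtrancl_into_rtrancl)

lemma final_step:
  assumes "size P < m" "sum_mset P + 1 = fib k" "k \<ge> 1"
  shows "agg_step m fib_set P {#fib k#}"
  unfolding agg_step_def
proof (intro conjI exI[of _ "{#}"] exI[of _ "[P + {#1#}]"])
  show "size P < m" by fact
  show "\<forall>G\<in>set [P + {#1#}]. G \<noteq> {#} \<and> sum_mset G \<in> fib_set"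
    using assms unfolding fib_set_def by auto
qed (use assms in auto)

lemma W: "1 \<le> k \<Longrightarrow> k \<le> 2*m \<Longrightarrow>
  \<exists>P. (agg_step m fib_set)\<^sup>*\<^sup>* {#} P \<and> size P < m \<and> sum_mset P + 1 = fib k"
proof (induction k arbitrary: m rule: less_induct)
  case (less k)
  show ?case
  proof (cases "k \<le> 2")
    case True
    then have "fib k = 1" using less.prems by (cases k; cases "k - 1") auto
    then show ?thesis using less.prems by (intro exI[of _ "{#}"]) auto
  next
    case False
    then have m2: "m \<ge> 2" using less.prems by simp
    have "\<exists>P. (agg_step m fib_set)\<^sup>*\<^sup>* {#} P \<and> size P < m \<and> sum_mset P + 1 = fib (k-1)"
      using less.prems False by (intro less.IH) auto
    then obtain P1 where P1: "(agg_step m fib_set)\<^sup>*\<^sup>* {#} P1" "size P1 < m"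
      "sum_mset P1 + 1 = fib (k-1)" by blast
    have r1: "(agg_step m fib_set)\<^sup>*\<^sup>* {#} {#fib (k-1)#}"
    proof -
      have s: "agg_step m fib_set P1 {#fib (k-1)#}"
        using P1 False by (intro final_step) auto
      show ?thesis by (rule rtranclp.rtrancl_into_rtrancl[OF P1(1) s])
    qed
    have "\<exists>P. (agg_step (m-1) fib_set)\<^sup>*\<^sup>* {#} P \<and> size P < m-1 \<and> sum_mset P + 1 = fib (k-2)"
      using less.prems False by (intro less.IH) auto
    then obtain P2 where P2: "(agg_step (m-1) fib_set)\<^sup>*\<^sup>* {#} P2" "size P2 < m-1"
      "sum_mset P2 + 1 = fib (k-2)" by blast
    have "(agg_step (m - 1 + size {#fib (k-1)#}) fib_set)\<^sup>*\<^sup>* ({#fib (k-1)#} + {#}) ({#fib (k-1)#} + P2)"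
      by (rule lift_rt[OF P2(1)])
    then have r2: "(agg_step m fib_set)\<^sup>*\<^sup>* {#fib (k-1)#} ({#fib (k-1)#} + P2)"
      using m2 by simp
    have fk: "fib k = fib (k-1) + fib (k-2)"
      using fib_plus_2[of "k-2"] False by (simp add: numeral_2_eq_2 Suc_diff_Suc)
    show ?thesis
      using r1 r2 P2 m2 fk
      by (intro exI[of _ "{#fib (k-1)#} + P2"]) auto
  qed
qed

lemma exists_max: "\<exists>P. agg_reachable n fib_set P \<and> sum_mset P = fib (2*n+1) - 1"
proof (induction n)
  case 0
  then show ?case by (intro exI[of _ "{#}"]) (simp add: agg_reachable_def)
next
  case (Suc n)
  then obtain P where P: "(agg_step n fib_set)\<^sup>*\<^sup>* {#} P" "sum_mset P = fib (2*n+1) - 1"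
    unfolding agg_reachable_def by blast
  obtain P1 where P1: "(agg_step (Suc n) fib_set)\<^sup>*\<^sup>* {#} P1" "size P1 < Suc n"
    "sum_mset P1 + 1 = fib (2*n+2)"
    using W[of "2*n+2" "Suc n"] by auto
  have r1: "(agg_step (Suc n) fib_set)\<^sup>*\<^sup>* {#} {#fib (2*n+2)#}"
  proof -
    have s: "agg_step (Suc n) fib_set P1 {#fib (2*n+2)#}"
      using P1 by (intro final_step) auto
    show ?thesis by (rule rtranclp.rtrancl_into_rtrancl[OF P1(1) s])
  qed
  have "(agg_step (n + size {#fib (2*n+2)#}) fib_set)\<^sup>*\<^sup>* ({#fib (2*n+2)#} + {#}) ({#fib (2*n+2)#} + P)"
    by (rule lift_rt[OF P(1)])
  then have r2: "(agg_step (Suc n) fib_set)\<^sup>*\<^sup>* {#fib (2*n+2)#} ({#fib (2*n+2)#} + P)" by simp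
  have f: "fib (2*Suc n+1) = fib (2*n+2) + fib (2*n+1)"
    using fib_plus_2[of "2*n+1"] by simp
  have pos: "fib (2*n+1) > 0" by (intro fib_neq_0_nat) simp
  show ?case using r1 r2 P(2) f pos unfolding agg_reachable_def
    by (intro exI[of _ "{#fib (2*n+2)#} + P"]) auto
qed

theorem mainTheorem12:
  fixes n :: nat
  assumes "n \<ge> 1"
  shows "agg_Total n fib_set = enat (fib (2 * n + 1) - 1)"
proof -
  obtain P where P: "agg_reachable n fib_set P" "sum_mset P = fib (2*n+1) - 1"
    using exists_max by blast
  show ?thesis unfolding agg_Total_def
  proof (rule antisym)
    show "(SUP P\<in>{P. agg_reachable n fib_set P}. enat (sum_mset P)) \<le> enat (fib (2 * n + 1) - 1)"
    proof (rule SUP_least)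
      fix Q assume "Q \<in> {P. agg_reachable n fib_set P}"
      then show "enat (sum_mset Q) \<le> enat (fib (2 * n + 1) - 1)" using upper by auto
    qed
    show "enat (fib (2 * n + 1) - 1) \<le> (SUP P\<in>{P. agg_reachable n fib_set P}. enat (sum_mset P))"
      using P by (metis (mono_tags, lifting) SUP_upper mem_Collect_eq)
  qed
qed

end
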